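(* If $n$ is a positive even integer, then $$\sum_{k=1}^\infty\frac{5^kF_n^{2k}}{L_n^{2k}(2k-1)(2k)(2k+1)}=\ln 2-\ln(L_n)+\frac{n}{\sqrt5}\,\frac{L_{2n}}{F_{2n}}\ln\alpha-\frac12.$$
   Context: $F_n$ and $L_n$ are the Fibonacci and Lucas numbers: $F_0=0,F_1=1$, $L_0=2,L_1=1$, and both satisfy $X_n=X_{n-1}+X_{n-2}$ (extended to all $n\in\mathbb Z$); equivalently $F_n=(\alpha^n-\beta^n)/(\alpha-\beta)$, $L_n=\alpha^n+\beta^n$ with $\alpha=(1+\sqrt5)/2$, $\beta=(1-\sqrt5)/2$. *)

theory Defs
  imports Complex_Main "HOL-Number_Theory.Fib"
begin

fun lucas :: "nat \<Rightarrow> nat" where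
  "lucas 0 = 2"
| "lucas (Suc 0) = 1"
| "lucas (Suc (Suc n)) = lucas (Suc n) + lucas n"

definition golden_alpha :: real where
  "golden_alpha = (1 + sqrt 5) / 2"

end

theory Submission
  imports Defs "HOL-Analysis.Analysis"
begin

definition gb :: real where "gb = (1 - sqrt 5) / 2"

lemma ab_facts: "golden_alpha + gb = 1" "golden_alpha * gb = -1" "golden_alpha - gb = sqrt 5"
  "golden_alpha^2 = golden_alpha + 1" "gb^2 = gb + 1"
  by (auto simp: golden_alpha_def gb_def field_simps power2_eq_square)

lemma binet: "real (fib n) = (golden_alpha^n - gb^n) / sqrt 5 \<and> real (lucas n) = golden_alpha^n + gb^n"
proof (induction n rule: fib.induct)
  case 1 then show ?case by simp
next
  case 2 then show ?case using ab_facts by simp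
next
  case (3 n)
  have "golden_alpha ^ Suc (Suc n) = golden_alpha^n * golden_alpha^2"
    by (simp add: power2_eq_square mult_ac)
  then have e1: "golden_alpha ^ Suc (Suc n) = golden_alpha ^ Suc n + golden_alpha ^ n"
    using ab_facts(4) by (simp add: algebra_simps)
  have "gb ^ Suc (Suc n) = gb^n * gb^2"
    by (simp add: power2_eq_square mult_ac)
  then have e2: "gb ^ Suc (Suc n) = gb ^ Suc n + gb ^ n"
    using ab_facts(5) by (simp add: algebra_simps)
  show ?case using 3 e1 e2 by (simp add: field_simps)
qed

lemma pf: fixes p z :: real assumes "p > 0"
  shows "(1/2) * (z / p) - z / (p+1) + (1/2)*(z / (p+2)) = z / (p * (p+1) * (p+2))"
proof -
  have "p \<noteq> 0" "p+1 \<noteq> 0" "p+2 \<noteq> 0" using assms by auto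
  then show ?thesis by (simp add: divide_simps) (simp add: algebra_simps)
qed

lemma frac_helper: fixes t :: real assumes "t > 0"
  shows "(t*t - 1) / (t*t + 1) = (t - 1/t) / (t + 1/t)"
proof -
  have t: "t \<noteq> 0" using assms by simp
  have "t - 1/t = (t*t - 1) / t" using t by (simp add: diff_divide_distrib)
  moreover have "t + 1/t = (t*t+1)/t" using t by (simp add: add_divide_distrib)
  moreover have "t*t+1 \<noteq> 0" by (smt (verit) zero_le_square)
  ultimately show ?thesis using t by simp
qed

lemma main_series:
  fixes y A :: real
  assumes y: "0 < y" "y < 1"
    and A: "(\<lambda>k. y^(2*k+1) / real (2*k+1)) sums A"
  shows "(\<lambda>k. y^(2*(k+1)) / ((2*real (k+1) - 1) * (2*real (k+1)) * (2*real (k+1) + 1)))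
          sums (y*A/2 + ln (1 - y^2)/2 + (A/y - 1)/2)"
proof -
  have s1: "(\<lambda>k. y^(2*k+2) / real (2*k+1)) sums (y*A)"
    using sums_mult[OF A, of y] by (simp add: field_simps)
  have "(\<lambda>k. y^(2*(Suc k)+1) / real (2*(Suc k)+1)) sums (A - y)"
    using A by (subst sums_Suc_iff) simp
  hence "(\<lambda>k. y^(2*(Suc k)+1) / real (2*(Suc k)+1) / y) sums ((A - y) / y)"
    by (rule sums_divide)
  moreover have "(\<lambda>k. y^(2*(Suc k)+1) / real (2*(Suc k)+1) / y) = (\<lambda>k. y^(2*k+2) / real (2*k+3))"
  proof
    fix k
    have "y^(2*(Suc k)+1) = y^(2*k+2)*y" by (simp add: algebra_simps)
    moreover have "real (2*(Suc k)+1) = real (2*k+3)" by simp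
    ultimately show "y^(2*(Suc k)+1) / real (2*(Suc k)+1) / y = y^(2*k+2) / real (2*k+3)"
      using y by simp
  qed
  moreover have "(A - y) / y = A/y - 1" using y by (simp add: field_simps)
  ultimately have s3: "(\<lambda>k. y^(2*k+2) / real (2*k+3)) sums (A/y - 1)" by simp
  have "\<bar>-(y^2)\<bar> < 1" using y by (simp add: abs_if power_less_one_iff)
  from ln_series'[OF this] have "(\<lambda>n. - ((y^2)^n) / real n) sums ln (1 - y^2)" by simp
  hence "(\<lambda>n. - ((y^2)^(Suc n)) / real (Suc n)) sums ln (1 - y^2)"
    by (subst sums_Suc_iff) simp
  hence "(\<lambda>n. (-1/2) * (- ((y^2)^(Suc n)) / real (Suc n))) sums ((-1/2) * ln (1 - y^2))"
    by (rule sums_mult)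
  moreover have "(\<lambda>n. (-1/2) * (- ((y^2)^(Suc n)) / real (Suc n))) = (\<lambda>k. y^(2*k+2) / real (2*k+2))"
  proof
    fix k
    have h1: "(y^2)^(Suc k) = y^(2*k+2)" by (subst power_mult[symmetric]) simp
    have h2: "real (2*k+2) = 2 * real (Suc k)" by simp
    show "(-1/2) * (- ((y^2)^(Suc k)) / real (Suc k)) = y^(2*k+2) / real (2*k+2)"
      by (subst h1, subst h2) simp
  qed
  ultimately have s2: "(\<lambda>k. y^(2*k+2) / real (2*k+2)) sums (- ln (1 - y^2) / 2)" by simp
  have "(\<lambda>k. (1/2) * (y^(2*k+2) / real (2*k+1)) - y^(2*k+2) / real (2*k+2) + (1/2)*(y^(2*k+2) / real (2*k+3)))
        sums ((1/2)*(y*A) - (- ln (1 - y^2) / 2) + (1/2) * (A/y - 1))"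
    by (intro sums_add sums_diff sums_mult s1 s2 s3)
  moreover have "(\<lambda>k. (1/2) * (y^(2*k+2) / real (2*k+1)) - y^(2*k+2) / real (2*k+2) + (1/2)*(y^(2*k+2) / real (2*k+3)))
     = (\<lambda>k. y^(2*(k+1)) / ((2*real (k+1) - 1) * (2*real (k+1)) * (2*real (k+1) + 1)))"
  proof
    fix k
    define z where "z = y^(2*k+2)"
    define r where "r = real k"
    have r: "r \<ge> 0" by (simp add: r_def)
    have "(1/2) * (z / (2*r+1)) - z / (2*r+2) + (1/2)*(z / (2*r+3))
        = z / ((2*(r+1) - 1) * (2*(r+1)) * (2*(r+1) + 1))"
    proof -
      have a: "2*r+1 > 0" using r by auto
      have b: "(2*(r+1) - 1) = 2*r+1" "2*(r+1) = (2*r+1)+1" "2*(r+1)+1 = (2*r+1)+2" "2*r+2 = (2*r+1)+1" "2*r+3 = (2*r+1)+2" by auto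
      show ?thesis unfolding b using pf[OF a, of z] by simp
    qed
    then show "(1/2) * (y^(2*k+2) / real (2*k+1)) - y^(2*k+2) / real (2*k+2) + (1/2)*(y^(2*k+2) / real (2*k+3))
     = y^(2*(k+1)) / ((2*real (k+1) - 1) * (2*real (k+1)) * (2*real (k+1) + 1))"
      by (simp add: z_def r_def algebra_simps)
  qed
  ultimately show ?thesis by (simp add: field_simps)
qed

theorem theorem10:
  fixes n :: nat
  assumes "n > 0" and "even n"
  shows "(\<lambda>k. 5 ^ (k+1) * real (fib n) ^ (2*(k+1)) /
            (real (lucas n) ^ (2*(k+1)) * (2*real (k+1) - 1) * (2*real (k+1)) * (2*real (k+1) + 1)))
         sums (ln 2 - ln (real (lucas n))
               + real n / sqrt 5 * (real (lucas (2*n)) / real (fib (2*n))) * ln golden_alpha - 1/2)"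
proof -
  define a where "a = real (fib n)"
  define l where "l = real (lucas n)"
  define al where "al = golden_alpha"
  have albe: "al * gb = -1" using ab_facts(2) by (simp add: al_def)
  have al_pos: "al > 0" unfolding al_def golden_alpha_def
    by (simp add: add_pos_nonneg)
  have s5: "sqrt 5 > 0" by simp
  have prod1: "al^n * gb^n = 1"
  proof -
    have "al^n * gb^n = (al*gb)^n" by (simp add: power_mult_distrib)
    also have "\<dots> = 1" using albe assms(2) by simp
    finally show ?thesis .
  qed
  have p2: "\<And>x::real. x^(2*n) = x^n * x^n" by (simp add: mult_2 power_add)
  have la: "l = al^n + gb^n" using binet[of n] by (simp add: l_def al_def)
  have aa: "sqrt 5 * a = al^n - gb^n" using binet[of n] s5 by (simp add: a_def al_def)
  have a_pos: "a > 0" using fib_neq_0_nat[OF assms(1)] by (simp add: a_def)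
  have key: "l^2 - 5*a^2 = 4"
  proof -
    have "5*a^2 = (sqrt 5 * a)^2" by (simp add: power_mult_distrib)
    then have "l^2 - 5*a^2 = (al^n + gb^n)^2 - (al^n - gb^n)^2" using la aa by simp
    also have "\<dots> = 4 * (al^n * gb^n)" by (simp add: power2_eq_square algebra_simps)
    finally show ?thesis using prod1 by simp
  qed
  have l_pos: "l > 0"
  proof -
    have "l \<ge> 0" by (simp add: l_def)
    moreover have "l \<noteq> 0"
    proof
      assume "l = 0"
      with key have "- 5 * a^2 = 4" by simp
      moreover have "a^2 \<ge> 0" by simp
      ultimately show False by linarith
    qed
    ultimately show ?thesis by simp
  qed
  have luc2: "real (lucas (2*n)) = l^2 - 2"
  proof -
    have "real (lucas (2*n)) = al^(2*n) + gb^(2*n)" using binet[of "2*n"] by (simp add: al_def)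
    also have "\<dots> = (al^n + gb^n)^2 - 2 * (al^n * gb^n)"
      by (simp only: p2) (simp add: power2_eq_square algebra_simps)
    finally show ?thesis using la prod1 by simp
  qed
  have fib2: "real (fib (2*n)) = a * l"
  proof -
    have "sqrt 5 * real (fib (2*n)) = al^(2*n) - gb^(2*n)" using binet[of "2*n"] s5 by (simp add: al_def)
    also have "\<dots> = (al^n - gb^n) * (al^n + gb^n)"
      by (simp only: p2) (simp add: power2_eq_square algebra_simps)
    also have "\<dots> = sqrt 5 * (a * l)" using la aa by simp
    finally show ?thesis using s5 by simp
  qed
  define y where "y = sqrt 5 * a / l"
  have y_pos: "y > 0" using a_pos l_pos by (simp add: y_def)
  have y2: "y^2 = 5 * a^2 / l^2" by (simp add: y_def power_divide power_mult_distrib)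
  have y2': "1 - y^2 = 4 / l^2"
  proof -
    have "l^2 > 0" using l_pos by simp
    then have "1 - y^2 = (l^2 - 5*a^2) / l^2" by (simp add: y2 diff_divide_distrib)
    then show ?thesis using key by simp
  qed
  have y_lt: "y < 1"
  proof -
    have "y^2 < 1" using y2' l_pos by (smt (verit) divide_pos_pos zero_less_power)
    then show ?thesis using y_pos by (smt (verit) one_le_power)
  qed
  define X where "X = al^(2*n)"
  have X_pos: "X > 0" using al_pos by (simp add: X_def)
  have gbn: "gb^n = 1 / al^n" using prod1 al_pos by (simp add: field_simps)
  have Xy: "(X - 1) / (X + 1) = y"
  proof -
    have "al^n > 0" using al_pos by simp
    have "(X - 1) / (X + 1) = (al^n - 1/al^n) / (al^n + 1/al^n)"
      unfolding X_def p2 using \<open>al^n > 0\<close> by (rule frac_helper)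
    also have "\<dots> = sqrt 5 * a / l" using la aa gbn by simp
    finally show ?thesis by (simp add: y_def)
  qed
  have "(\<lambda>k. 2 * y^(2*k+1) / real (2*k+1)) sums ln X"
    using ln_series_quadratic[OF X_pos] Xy by simp
  hence H: "(\<lambda>k. 2 * y^(2*k+1) / real (2*k+1) / 2) sums (ln X / 2)" by (rule sums_divide)
  have V: "ln X / 2 = real n * ln al"
    using al_pos by (simp add: X_def ln_realpow)
  have F: "(\<lambda>k. 2 * y^(2*k+1) / real (2*k+1) / 2) = (\<lambda>k. y^(2*k+1) / real (2*k+1))" by (intro ext) (simp add: divide_simps)
  from H have A: "(\<lambda>k. y^(2*k+1) / real (2*k+1)) sums (real n * ln al)" unfolding F V .
  note M = main_series[OF y_pos y_lt A]
  have termeq: "(\<lambda>k. 5 ^ (k+1) * real (fib n) ^ (2*(k+1)) /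
            (real (lucas n) ^ (2*(k+1)) * (2*real (k+1) - 1) * (2*real (k+1)) * (2*real (k+1) + 1)))
     = (\<lambda>k. y^(2*(k+1)) / ((2*real (k+1) - 1) * (2*real (k+1)) * (2*real (k+1) + 1)))"
  proof
    fix k
    have "y^(2*(k+1)) = (y^2)^(k+1)" by (rule power_mult)
    also have "\<dots> = 5^(k+1) * a^(2*(k+1)) / l^(2*(k+1))"
      unfolding y2 power_divide power_mult_distrib power_mult ..
    finally show "5 ^ (k+1) * real (fib n) ^ (2*(k+1)) /
            (real (lucas n) ^ (2*(k+1)) * (2*real (k+1) - 1) * (2*real (k+1)) * (2*real (k+1) + 1))
       = y^(2*(k+1)) / ((2*real (k+1) - 1) * (2*real (k+1)) * (2*real (k+1) + 1))"
      by (simp add: a_def l_def)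
  qed
  have lnpart: "ln (1 - y^2) / 2 = ln 2 - ln l"
  proof -
    have "ln (1 - y^2) = ln (2^2) - ln (l^2)" using y2' l_pos by (simp add: ln_div)
    also have "\<dots> = 2 * ln 2 - 2 * ln l" using ln_realpow[of 2 2] ln_realpow[of l 2] l_pos by simp
    finally show ?thesis by simp
  qed
  have rest: "y * (real n * ln al) / 2 + (real n * ln al / y - 1) / 2
     = real n / sqrt 5 * (real (lucas (2*n)) / real (fib (2*n))) * ln golden_alpha - 1/2"
  proof -
    have E: "(y + 1/y) / 2 = (l^2 - 2) / (sqrt 5 * (a * l))"
    proof -
      define D where "D = sqrt 5 * (a * l)"
      have Dp: "D > 0" using s5 a_pos l_pos by (simp add: D_def)
      have yD: "y * D = 5 * a^2" using l_pos
        by (simp add: y_def D_def power2_eq_square)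
      have iyD: "(1/y) * D = l^2" using a_pos s5
        by (simp add: y_def D_def power2_eq_square)
      have "(y + 1/y)/2 * D = (y*D + (1/y)*D)/2" by (simp add: algebra_simps)
      also have "\<dots> = l^2 - 2" using yD iyD key by simp
      finally have "(y + 1/y)/2 * D = l^2 - 2" .
      then have "(y + 1/y)/2 = (l^2 - 2) / D" using Dp by (simp add: eq_divide_eq)
      then show ?thesis unfolding D_def .
    qed
    have M2: "y * (real n * ln al) / 2 + (real n * ln al / y - 1) / 2
        = (y + 1/y) / 2 * (real n * ln al) - 1/2" using y_pos by (simp add: field_simps)
    have R: "real n / sqrt 5 * (real (lucas (2*n)) / real (fib (2*n))) * ln golden_alpha
       = (l^2 - 2) / (sqrt 5 * (a * l)) * (real n * ln al)"
      unfolding luc2 fib2 al_def by (simp add: mult_ac)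
    show ?thesis unfolding M2 E R ..
  qed
  have fin: "y * (real n * ln al) / 2 + ln (1 - y^2) / 2 + (real n * ln al / y - 1) / 2
     = ln 2 - ln (real (lucas n))
               + real n / sqrt 5 * (real (lucas (2*n)) / real (fib (2*n))) * ln golden_alpha - 1/2"
    using rest lnpart unfolding l_def by linarith
  show ?thesis using M unfolding termeq fin .
qed

end
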